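(* Let $\mathfrak e_1,\mathfrak e_1',\mathfrak e_2$ be virtual extended $\mathbb Z$-segments with $\mathrm{Supp}(\mathfrak e_1)=\mathrm{Supp}(\mathfrak e_1')$, and with $\mathrm{Supp}(\mathfrak e_1)\subseteq\mathrm{Supp}(\mathfrak e_2)$ or $\mathrm{Supp}(\mathfrak e_1)\supseteq\mathrm{Supp}(\mathfrak e_2)$. Write $R(\mathfrak e_1,\mathfrak e_2)=(\widetilde{\mathfrak e_2},\widetilde{\mathfrak e_1})$ and $R(\mathfrak e_1',\mathfrak e_2)=(\widetilde{\mathfrak e_2}',\widetilde{\mathfrak e_1}')$. Then: (1) if $\mathfrak e_1\ne\mathfrak e_1'$, then $\widetilde{\mathfrak e_1}\ne\widetilde{\mathfrak e_1}'$; (2) if $\mathfrak e_1$ and $\mathfrak e_1'$ are adjacent, then $\widetilde{\mathfrak e_1}$ and $\widetilde{\mathfrak e_1}'$ are adjacent. Consequently $\mathfrak e_1\mapsto\widetilde{\mathfrak e_1}$ is a bijection of the set of virtual extended $\mathbb Z$-segments with support $\mathrm{Supp}(\mathfrak e_1)$ sending virtual intervals to virtual intervals; the analogous statement holds for the map given by $R(\mathfrak e_1,-)$.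
   Context: A $\mathbb Z$-segment is $[A,B]=\{A,\dots,B\}$, $A\ge B$ integers, length $b=A-B+1$. A virtual extended $\mathbb Z$-segment is $([A,B],l,\eta)$, $l\in\mathbb Z$, $l\le b/2$, $\eta\in\{\pm1\}$ with $\eta\sim-\eta$ iff $b=2l$; $\mathrm{Supp}=[A,B]$. Two are adjacent if they have the same support and either admit lifts with $\eta_1=\eta_2$, $|l_1-l_2|=1$, or $b$ is odd, $l_1=l_2=(b-1)/2$, $\eta_1=-\eta_2$. A virtual interval is a finite set of distinct virtual extended segments $\{\mathfrak e_1,\dots,\mathfrak e_r\}$ with $\mathfrak e_i$ adjacent to $\mathfrak e_{i+1}$. Row exchange: for $\mathfrak e_i=([A_i,B_i],l_i,\eta_i)$ ($i=1,2$) with nested supports, $R(\mathfrak e_1,\mathfrak e_2)=(\mathfrak e_2',\mathfrak e_1')$ with $\mathfrak e_i'=([A_i,B_i],l_i',\eta_i')$, where $b_i=A_i-B_i+1$, $\epsilon=(-1)^{A_1-B_1}\eta_1\eta_2$ (any lifts). Case 1, $[A_1,B_1]\subseteq[A_2,B_2]$: $(l_1',\eta_1')=(l_1,(-1)^{A_2-B_2}\eta_1)$ and (a) if $\epsilon=1$, $b_2-2l_2<2(b_1-2l_1)$: $(l_2',\eta_2')=(b_2-(l_2+(b_1-2l_1)),(-1)^{A_1-B_1}\eta_2)$; (b) if $\epsilon=1$, $b_2-2l_2\ge2(b_1-2l_1)$: $(l_2',\eta_2')=(l_2+(b_1-2l_1),(-1)^{A_1-B_1+1}\eta_2)$; (c)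 if $\epsilon=-1$: $(l_2',\eta_2')=(l_2-(b_1-2l_1),(-1)^{A_1-B_1+1}\eta_2)$. Case 2, $[A_1,B_1]\supsetneq[A_2,B_2]$: $(l_2',\eta_2')=(l_2,(-1)^{A_1-B_1}\eta_2)$ and (a) if $\epsilon=1$, $b_1-2l_1<2(b_2-2l_2)$: $(l_1',\eta_1')=(b_1-(l_1+(b_2-2l_2)),(-1)^{A_2-B_2}\eta_1)$; (b) if $\epsilon=1$, $b_1-2l_1\ge2(b_2-2l_2)$: $(l_1',\eta_1')=(l_1+(b_2-2l_2),(-1)^{A_2-B_2+1}\eta_1)$; (c) if $\epsilon=-1$: $(l_1',\eta_1')=(l_1-(b_2-2l_2),(-1)^{A_2-B_2+1}\eta_1)$. *)

theory Defs
  imports Main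
begin

text \<open>A virtual extended Z-segment ([A,B], l, eta) is represented by a canonical
  representative: VS A B l eta with A \<ge> B, 2 l \<le> b, eta \<in> {1,-1}, and, since
  eta ~ -eta exactly when b = 2 l, we normalise eta = 1 in that case.\<close>

datatype vseg = VS (sA: int) (sB: int) (sl: int) (seta: int)

definition seg_len :: "vseg \<Rightarrow> int" where
  "seg_len e = sA e - sB e + 1"

definition supp :: "vseg \<Rightarrow> int set" where
  "supp e = {sB e .. sA e}"

definition valid_vseg :: "vseg \<Rightarrow> bool" where
  "valid_vseg e \<longleftrightarrow> sB e \<le> sA e \<and> 2 * sl e \<le> seg_len e \<and> seta e \<in> {1, -1}
     \<and> (2 * sl e = seg_len e \<longrightarrow> seta e = 1)"

definition norm_vseg :: "vseg \<Rightarrow> vseg" where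
  "norm_vseg e = (if 2 * sl e = seg_len e then VS (sA e) (sB e) (sl e) 1 else e)"

definition eta_lifts :: "vseg \<Rightarrow> int set" where
  "eta_lifts e = (if 2 * sl e = seg_len e then {1, -1} else {seta e})"

definition vsegs_with_supp :: "int \<Rightarrow> int \<Rightarrow> vseg set" where
  "vsegs_with_supp A B = {e. valid_vseg e \<and> sA e = A \<and> sB e = B}"

definition adjacent :: "vseg \<Rightarrow> vseg \<Rightarrow> bool" where
  "adjacent e1 e2 \<longleftrightarrow> sA e1 = sA e2 \<and> sB e1 = sB e2 \<and>
     ((\<exists>h1\<in>eta_lifts e1. \<exists>h2\<in>eta_lifts e2. h1 = h2 \<and> \<bar>sl e1 - sl e2\<bar> = 1) \<or>
      (odd (seg_len e1) \<and> 2 * sl e1 = seg_len e1 - 1 \<and> 2 * sl e2 = seg_len e1 - 1 \<and>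
       seta e1 = - seta e2))"

definition virtual_interval :: "vseg set \<Rightarrow> bool" where
  "virtual_interval S \<longleftrightarrow> (\<exists>es. distinct es \<and> set es = S \<and> (\<forall>e\<in>S. valid_vseg e) \<and>
      (\<forall>i. Suc i < length es \<longrightarrow> adjacent (es ! i) (es ! Suc i)))"

definition sgnpow :: "int \<Rightarrow> int" where
  "sgnpow k = (if even k then 1 else -1)"

text \<open>Row exchange R(e1,e2) = (e2', e1'); meaningful only for nested supports.\<close>
definition row_exchange :: "vseg \<Rightarrow> vseg \<Rightarrow> vseg \<times> vseg" where
  "row_exchange e1 e2 =
    (let A1 = sA e1; B1 = sB e1; l1 = sl e1; h1 = seta e1;
         A2 = sA e2; B2 = sB e2; l2 = sl e2; h2 = seta e2;
         b1 = seg_len e1; b2 = seg_len e2;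
         eps = sgnpow (A1 - B1) * h1 * h2
     in if B2 \<le> B1 \<and> A1 \<le> A2 then
          (norm_vseg
             (if eps = 1 \<and> b2 - 2 * l2 < 2 * (b1 - 2 * l1)
              then VS A2 B2 (b2 - (l2 + (b1 - 2 * l1))) (sgnpow (A1 - B1) * h2)
              else if eps = 1
              then VS A2 B2 (l2 + (b1 - 2 * l1)) (sgnpow (A1 - B1 + 1) * h2)
              else VS A2 B2 (l2 - (b1 - 2 * l1)) (sgnpow (A1 - B1 + 1) * h2)),
           norm_vseg (VS A1 B1 l1 (sgnpow (A2 - B2) * h1)))
        else
          (norm_vseg (VS A2 B2 l2 (sgnpow (A1 - B1) * h2)),
           norm_vseg
             (if eps = 1 \<and> b1 - 2 * l1 < 2 * (b2 - 2 * l2)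
              then VS A1 B1 (b1 - (l1 + (b2 - 2 * l2))) (sgnpow (A2 - B2) * h1)
              else if eps = 1
              then VS A1 B1 (l1 + (b2 - 2 * l2)) (sgnpow (A2 - B2 + 1) * h1)
              else VS A1 B1 (l1 - (b2 - 2 * l2)) (sgnpow (A2 - B2 + 1) * h1))))"

end

theory Submission
  imports Defs
begin

definition FF :: "int \<Rightarrow> vseg \<Rightarrow> vseg" where
  "FF s e = norm_vseg (VS (sA e) (sB e) (sl e) (s * seta e))"

definition TT :: "int \<Rightarrow> int \<Rightarrow> int \<Rightarrow> vseg \<Rightarrow> vseg" where
  "TT m q p e = norm_vseg
     (if q * seta e = 1 \<and> seg_len e - 2 * sl e < 2 * m
      then VS (sA e) (sB e) (seg_len e - (sl e + m)) (p * seta e)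
      else if q * seta e = 1
      then VS (sA e) (sB e) (sl e + m) (- p * seta e)
      else VS (sA e) (sB e) (sl e - m) (- p * seta e))"

lemma sgnpow_pm: "sgnpow k = 1 \<or> sgnpow k = -1"
  by (simp add: sgnpow_def)

lemma sgnpow_Suc: "sgnpow (k + 1) = - sgnpow k"
  by (simp add: sgnpow_def)

lemma snd_sub: "sB e2 \<le> sB e \<Longrightarrow> sA e \<le> sA e2 \<Longrightarrow>
   snd (row_exchange e e2) = FF (sgnpow (sA e2 - sB e2)) e"
  by (auto simp add: row_exchange_def Let_def FF_def)

lemma snd_sup: "\<not> (sB e2 \<le> sB e \<and> sA e \<le> sA e2) \<Longrightarrow>
   snd (row_exchange e e2) = TT (seg_len e2 - 2 * sl e2) (sgnpow (sA e - sB e) * seta e2)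
      (sgnpow (sA e2 - sB e2)) e"
  by (auto simp add: row_exchange_def Let_def TT_def sgnpow_Suc mult_ac)

lemma fst_sup: "\<not> (sB e \<le> sB e1 \<and> sA e1 \<le> sA e) \<Longrightarrow>
   fst (row_exchange e1 e) = FF (sgnpow (sA e1 - sB e1)) e"
  by (auto simp add: row_exchange_def Let_def FF_def)

lemma fst_sub: "sB e \<le> sB e1 \<Longrightarrow> sA e1 \<le> sA e \<Longrightarrow>
   fst (row_exchange e1 e) = TT (seg_len e1 - 2 * sl e1) (sgnpow (sA e1 - sB e1) * seta e1)
      (sgnpow (sA e1 - sB e1)) e"
  by (auto simp add: row_exchange_def Let_def TT_def sgnpow_Suc mult_ac)


definition pos :: "vseg \<Rightarrow> int" where "pos e = seta e * (seg_len e - 2 * sl e)"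

lemma valid_VS: "valid_vseg (VS A B l h) \<longleftrightarrow> B \<le> A \<and> 2 * l \<le> A - B + 1 \<and> (h = 1 \<or> h = -1)
   \<and> (2 * l = A - B + 1 \<longrightarrow> h = 1)"
  by (auto simp: valid_vseg_def seg_len_def)

lemma pos_inj:
  assumes "valid_vseg e" "valid_vseg f" "sA e = sA f" "sB e = sB f" "pos e = pos f"
  shows "e = f"
proof -
  obtain A B l h where e: "e = VS A B l h" by (cases e)
  obtain l' h' where f: "f = VS A B l' h'" using assms(3,4) e by (cases f) auto
  have v: "B \<le> A" "2 * l \<le> A - B + 1" "h = 1 \<or> h = -1" "2 * l = A - B + 1 \<longrightarrow> h = 1"
    "2 * l' \<le> A - B + 1" "h' = 1 \<or> h' = -1" "2 * l' = A - B + 1 \<longrightarrow> h' = 1"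
    using assms(1,2) unfolding e f valid_VS by auto
  have p: "h * (A - B + 1 - 2 * l) = h' * (A - B + 1 - 2 * l')"
    using assms(5) unfolding e f pos_def seg_len_def by simp
  show ?thesis unfolding e f using v p by (elim disjE) auto
qed

lemma adj_pos:
  assumes "valid_vseg e" "valid_vseg f" "sA e = sA f" "sB e = sB f"
  shows "adjacent e f \<longleftrightarrow> \<bar>pos e - pos f\<bar> = 2"
proof -
  obtain A B l h where e: "e = VS A B l h" by (cases e)
  obtain l' h' where f: "f = VS A B l' h'" using assms(3,4) e by (cases f) auto
  have v: "B \<le> A" "2 * l \<le> A - B + 1" "h = 1 \<or> h = -1" "2 * l = A - B + 1 \<longrightarrow> h = 1"
    "2 * l' \<le> A - B + 1" "h' = 1 \<or> h' = -1" "2 * l' = A - B + 1 \<longrightarrow> h' = 1"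
    using assms(1,2) unfolding e f valid_VS by auto
  show ?thesis unfolding e f using v
    apply (elim disjE)
    apply (auto simp: adjacent_def eta_lifts_def pos_def seg_len_def)
    apply presburger+
    done
qed

lemma pos_TT:
  assumes "valid_vseg e" "q = 1 \<or> q = -1" "p = 1 \<or> p = -1" "m \<ge> 0"
  shows "pos (TT m q p e) = 2 * m * p * q - p * pos e"
proof -
  obtain A B l h where e: "e = VS A B l h" by (cases e)
  have v: "B \<le> A" "2 * l \<le> A - B + 1" "h = 1 \<or> h = -1" "2 * l = A - B + 1 \<longrightarrow> h = 1"
    using assms(1) unfolding e valid_VS by auto
  show ?thesis unfolding e using v assms(2-4)
    by (elim disjE) (auto simp: TT_def norm_vseg_def pos_def seg_len_def)
qed

lemma pos_FF:
  assumes "valid_vseg e" "s = 1 \<or> s = -1"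
  shows "pos (FF s e) = s * pos e"
  using assms by (cases e) (auto simp: FF_def norm_vseg_def valid_vseg_def seg_len_def pos_def)

lemma TT_valid:
  assumes "valid_vseg e" "q = 1 \<or> q = -1" "p = 1 \<or> p = -1" "m \<ge> 0"
  shows "valid_vseg (TT m q p e) \<and> sA (TT m q p e) = sA e \<and> sB (TT m q p e) = sB e"
proof -
  obtain A B l h where e: "e = VS A B l h" by (cases e)
  have v: "B \<le> A" "2 * l \<le> A - B + 1" "h = 1 \<or> h = -1" "2 * l = A - B + 1 \<longrightarrow> h = 1"
    using assms(1) unfolding e valid_VS by auto
  show ?thesis unfolding e using v assms(2-4)
    by (elim disjE) (auto simp: TT_def norm_vseg_def valid_VS seg_len_def)
qed

lemma TT_inj:
  assumes "valid_vseg e" "valid_vseg f" "sA e = sA f" "sB e = sB f"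
    "q = 1 \<or> q = -1" "p = 1 \<or> p = -1" "m \<ge> 0" "TT m q p e = TT m q p f"
  shows "e = f"
proof -
  have "pos (TT m q p e) = pos (TT m q p f)" using assms(8) by simp
  then have "p * pos e = p * pos f"
    using pos_TT[OF assms(1,5-7)] pos_TT[OF assms(2,5-7)] by linarith
  then have "pos e = pos f" using assms(6) by auto
  then show ?thesis using pos_inj assms(1-4) by blast
qed

lemma TT_adj:
  assumes "valid_vseg e" "valid_vseg f" "sA e = sA f" "sB e = sB f"
    "q = 1 \<or> q = -1" "p = 1 \<or> p = -1" "m \<ge> 0" "adjacent e f"
  shows "adjacent (TT m q p e) (TT m q p f)"
proof -
  have a: "\<bar>pos e - pos f\<bar> = 2" using adj_pos assms(1-4,8) by blast
  have "\<bar>pos (TT m q p e) - pos (TT m q p f)\<bar> = \<bar>p * (pos f - pos e)\<bar>"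
    using pos_TT[OF assms(1,5-7)] pos_TT[OF assms(2,5-7)] by (simp add: algebra_simps)
  also have "\<dots> = 2" using a assms(6) by (auto simp: abs_minus_commute)
  finally show ?thesis
    using adj_pos TT_valid[OF assms(1,5-7)] TT_valid[OF assms(2,5-7)] assms(3,4) by metis
qed

lemma FF_valid:
  assumes "valid_vseg e" "s = 1 \<or> s = -1"
  shows "valid_vseg (FF s e) \<and> sA (FF s e) = sA e \<and> sB (FF s e) = sB e"
  using assms by (cases e) (auto simp: FF_def norm_vseg_def valid_vseg_def seg_len_def)

lemma FF_inv:
  assumes "valid_vseg e" "s = 1 \<or> s = -1"
  shows "FF s (FF s e) = e"
  using assms by (cases e) (auto simp: FF_def norm_vseg_def valid_vseg_def seg_len_def)

lemma FF_adj:
  assumes "valid_vseg e" "valid_vseg f" "s = 1 \<or> s = -1" "adjacent e f"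
  shows "adjacent (FF s e) (FF s f)"
proof -
  have s: "sA e = sA f" "sB e = sB f" using assms(4) by (auto simp: adjacent_def)
  have a: "\<bar>pos e - pos f\<bar> = 2" using adj_pos assms(1,2,4) s by blast
  have "\<bar>pos (FF s e) - pos (FF s f)\<bar> = \<bar>s * (pos e - pos f)\<bar>"
    using pos_FF[OF assms(1,3)] pos_FF[OF assms(2,3)] by (simp add: algebra_simps)
  also have "\<dots> = 2" using a assms(3) by auto
  finally show ?thesis
    using adj_pos FF_valid[OF assms(1,3)] FF_valid[OF assms(2,3)] s by metis
qed


definition TTinv :: "int \<Rightarrow> int \<Rightarrow> int \<Rightarrow> vseg \<Rightarrow> vseg" where
  "TTinv m q p y = norm_vseg
     (if seg_len y - 2 * sl y = 0 \<and> m = 0 then y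
      else if seta y = - p * q \<or> seg_len y - 2 * sl y = 0 then VS (sA y) (sB y) (sl y - m) q
      else if seg_len y - 2 * sl y > 2 * m then VS (sA y) (sB y) (sl y + m) (- q)
      else VS (sA y) (sB y) (seg_len y - sl y - m) q)"

lemma TTinv_valid:
  assumes "valid_vseg y" "q = 1 \<or> q = -1" "p = 1 \<or> p = -1" "m \<ge> 0"
  shows "valid_vseg (TTinv m q p y) \<and> sA (TTinv m q p y) = sA y \<and> sB (TTinv m q p y) = sB y"
  using assms by (cases y) (auto simp: TTinv_def norm_vseg_def valid_vseg_def seg_len_def)

lemma TTinv_inv:
  assumes "valid_vseg y" "q = 1 \<or> q = -1" "p = 1 \<or> p = -1" "m \<ge> 0"
  shows "TT m q p (TTinv m q p y) = y"
  using assms by (cases y) (auto simp: TT_def TTinv_def norm_vseg_def valid_vseg_def seg_len_def)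


definition good :: "(vseg \<Rightarrow> vseg) \<Rightarrow> vseg set \<Rightarrow> bool" where
  "good G V \<longleftrightarrow> (\<forall>e\<in>V. G e \<in> V) \<and> inj_on G V \<and> (\<forall>y\<in>V. \<exists>x\<in>V. G x = y) \<and>
     (\<forall>e\<in>V. \<forall>f\<in>V. adjacent e f \<longrightarrow> adjacent (G e) (G f))"

lemma good_cong: "good H V \<Longrightarrow> (\<And>e. e \<in> V \<Longrightarrow> G e = H e) \<Longrightarrow> good G V"
  unfolding good_def by (smt (verit, best) inj_on_cong)

lemma good_bij: "good G V \<Longrightarrow> bij_betw G V V"
  unfolding good_def bij_betw_def by (auto simp: image_iff)

lemma good_vi:
  assumes g: "good G V" and V: "V = vsegs_with_supp A B" and S: "S \<subseteq> V" and vi: "virtual_interval S"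
  shows "virtual_interval (G ` S)"
proof -
  obtain es where es: "distinct es" "set es = S" "\<forall>e\<in>S. valid_vseg e"
      "\<forall>i. Suc i < length es \<longrightarrow> adjacent (es ! i) (es ! Suc i)"
    using vi unfolding virtual_interval_def by blast
  have inj: "inj_on G S" using g S unfolding good_def by (meson inj_on_subset)
  have "distinct (map G es)" using es(1,2) inj by (simp add: distinct_map)
  moreover have "set (map G es) = G ` S" using es(2) by simp
  moreover have "\<forall>e\<in>G ` S. valid_vseg e" using g S V unfolding good_def vsegs_with_supp_def by blast
  moreover have "\<forall>i. Suc i < length (map G es) \<longrightarrow> adjacent (map G es ! i) (map G es ! Suc i)"
  proof (intro allI impI)
    fix i assume i: "Suc i < length (map G es)"
    have "es ! i \<in> V" "es ! Suc i \<in> V" using i es(2) S by auto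
    then show "adjacent (map G es ! i) (map G es ! Suc i)"
      using g es(4) i unfolding good_def by simp
  qed
  ultimately show ?thesis unfolding virtual_interval_def by blast
qed



lemma good_FF:
  assumes s: "s = 1 \<or> s = -1"
  shows "good (FF s) (vsegs_with_supp A B)"
  unfolding good_def
proof (intro conjI ballI impI)
  fix e assume "e \<in> vsegs_with_supp A B"
  then show "FF s e \<in> vsegs_with_supp A B"
    using FF_valid[OF _ s, of e] by (simp add: vsegs_with_supp_def)
next
  show "inj_on (FF s) (vsegs_with_supp A B)"
  proof (rule inj_onI)
    fix x y assume x: "x \<in> vsegs_with_supp A B" and y: "y \<in> vsegs_with_supp A B"
      and eq: "FF s x = FF s y"
    have "x = FF s (FF s x)" using x FF_inv[OF _ s, of x] by (simp add: vsegs_with_supp_def)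
    also have "\<dots> = FF s (FF s y)" using eq by simp
    also have "\<dots> = y" using y FF_inv[OF _ s, of y] by (simp add: vsegs_with_supp_def)
    finally show "x = y" .
  qed
next
  fix y assume y: "y \<in> vsegs_with_supp A B"
  then have "FF s y \<in> vsegs_with_supp A B" "FF s (FF s y) = y"
    using FF_valid[OF _ s, of y] FF_inv[OF _ s, of y] by (simp_all add: vsegs_with_supp_def)
  then show "\<exists>x\<in>vsegs_with_supp A B. FF s x = y" by blast
next
  fix e f assume "e \<in> vsegs_with_supp A B" "f \<in> vsegs_with_supp A B" "adjacent e f"
  then show "adjacent (FF s e) (FF s f)"
    using FF_adj[OF _ _ s] by (simp add: vsegs_with_supp_def)
qed

lemma good_TT:
  assumes q: "q = 1 \<or> q = -1" and p: "p = 1 \<or> p = -1" and m: "m \<ge> 0"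
  shows "good (TT m q p) (vsegs_with_supp A B)"
  unfolding good_def
proof (intro conjI ballI impI)
  fix e assume "e \<in> vsegs_with_supp A B"
  then show "TT m q p e \<in> vsegs_with_supp A B"
    using TT_valid[OF _ q p m, of e] by (simp add: vsegs_with_supp_def)
next
  show "inj_on (TT m q p) (vsegs_with_supp A B)"
  proof (rule inj_onI)
    fix x y assume x: "x \<in> vsegs_with_supp A B" and y: "y \<in> vsegs_with_supp A B"
      and eq: "TT m q p x = TT m q p y"
    show "x = y" using TT_inj[OF _ _ _ _ q p m eq] x y by (simp add: vsegs_with_supp_def)
  qed
next
  fix y assume y: "y \<in> vsegs_with_supp A B"
  then have "TTinv m q p y \<in> vsegs_with_supp A B" "TT m q p (TTinv m q p y) = y"
    using TTinv_valid[OF _ q p m, of y] TTinv_inv[OF _ q p m, of y]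
    by (simp_all add: vsegs_with_supp_def)
  then show "\<exists>x\<in>vsegs_with_supp A B. TT m q p x = y" by blast
next
  fix e f assume "e \<in> vsegs_with_supp A B" "f \<in> vsegs_with_supp A B" "adjacent e f"
  then show "adjacent (TT m q p e) (TT m q p f)"
    using TT_adj[OF _ _ _ _ q p m] by (simp add: vsegs_with_supp_def)
qed


theorem lemma4p12:
  assumes v1: "valid_vseg e1" and v1': "valid_vseg e1'" and v2: "valid_vseg e2"
    and same: "supp e1 = supp e1'"
    and nested: "supp e1 \<subseteq> supp e2 \<or> supp e2 \<subseteq> supp e1"
  shows "(e1 \<noteq> e1' \<longrightarrow> snd (row_exchange e1 e2) \<noteq> snd (row_exchange e1' e2))
    \<and> (adjacent e1 e1' \<longrightarrow> adjacent (snd (row_exchange e1 e2)) (snd (row_exchange e1' e2)))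
    \<and> bij_betw (\<lambda>e. snd (row_exchange e e2))
         (vsegs_with_supp (sA e1) (sB e1)) (vsegs_with_supp (sA e1) (sB e1))
    \<and> (\<forall>S \<subseteq> vsegs_with_supp (sA e1) (sB e1). virtual_interval S \<longrightarrow>
          virtual_interval ((\<lambda>e. snd (row_exchange e e2)) ` S))
    \<and> bij_betw (\<lambda>e. fst (row_exchange e1 e))
         (vsegs_with_supp (sA e2) (sB e2)) (vsegs_with_supp (sA e2) (sB e2))
    \<and> (\<forall>S \<subseteq> vsegs_with_supp (sA e2) (sB e2). virtual_interval S \<longrightarrow>
          virtual_interval ((\<lambda>e. fst (row_exchange e1 e)) ` S))"
proof -
  define V1 where "V1 = vsegs_with_supp (sA e1) (sB e1)"
  define V2 where "V2 = vsegs_with_supp (sA e2) (sB e2)"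
  have sp: "\<And>k. sgnpow k = 1 \<or> sgnpow k = -1" by (rule sgnpow_pm)
  have h1: "seta e1 = 1 \<or> seta e1 = -1" and h2: "seta e2 = 1 \<or> seta e2 = -1"
    using v1 v2 by (auto simp: valid_vseg_def)
  have m1: "seg_len e1 - 2 * sl e1 \<ge> 0" and m2: "seg_len e2 - 2 * sl e2 \<ge> 0"
    using v1 v2 by (auto simp: valid_vseg_def)
  have pm: "\<And>a b::int. a = 1 \<or> a = -1 \<Longrightarrow> b = 1 \<or> b = -1 \<Longrightarrow> a * b = 1 \<or> a * b = -1"
    by auto
  have e1V: "e1 \<in> V1" using v1 by (simp add: V1_def vsegs_with_supp_def)
  have "sA e1' = sA e1 \<and> sB e1' = sB e1"
    using same v1 v1' by (auto simp: supp_def valid_vseg_def)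
  hence e1'V: "e1' \<in> V1" using v1' by (simp add: V1_def vsegs_with_supp_def)
  have g1: "good (\<lambda>e. snd (row_exchange e e2)) (vsegs_with_supp (sA e1) (sB e1))"
  proof (cases "sB e2 \<le> sB e1 \<and> sA e1 \<le> sA e2")
    case True
    show ?thesis
      by (rule good_cong[OF good_FF[OF sp, of "sA e2 - sB e2"]])
        (use True in \<open>auto simp: vsegs_with_supp_def snd_sub\<close>)
  next
    case False
    show ?thesis
      by (rule good_cong[OF good_TT[OF pm[OF sp h2] sp m2, of "sA e1 - sB e1" "sA e2 - sB e2"]])
        (use False in \<open>auto simp: vsegs_with_supp_def snd_sup\<close>)
  qed
  have g2: "good (\<lambda>e. fst (row_exchange e1 e)) (vsegs_with_supp (sA e2) (sB e2))"
  proof (cases "sB e2 \<le> sB e1 \<and> sA e1 \<le> sA e2")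
    case True
    show ?thesis
      by (rule good_cong[OF good_TT[OF pm[OF sp h1] sp m1, of "sA e1 - sB e1" "sA e1 - sB e1"]])
        (use True in \<open>auto simp: vsegs_with_supp_def fst_sub\<close>)
  next
    case False
    show ?thesis
      by (rule good_cong[OF good_FF[OF sp, of "sA e1 - sB e1"]])
        (use False in \<open>auto simp: vsegs_with_supp_def fst_sup\<close>)
  qed
  have c1: "e1 \<noteq> e1' \<longrightarrow> snd (row_exchange e1 e2) \<noteq> snd (row_exchange e1' e2)"
    using g1 e1V e1'V unfolding V1_def unfolding good_def inj_on_def by blast
  have c2: "adjacent e1 e1' \<longrightarrow> adjacent (snd (row_exchange e1 e2)) (snd (row_exchange e1' e2))"
    using g1 e1V e1'V unfolding V1_def unfolding good_def by blast
  show ?thesis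
    using c1 c2 good_bij[OF g1] good_bij[OF g2] good_vi[OF g1 refl] good_vi[OF g2 refl]
    unfolding V1_def V2_def by blast
qed

end
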